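(* Let $n\ge 3$ and let $D_{2n}=\langle a,b : a^n=b^2=e,\ bab=a^{-1}\rangle$ be the dihedral group of order $2n$. Let $H$ be a normal subgroup of $D_{2n}$. Then $\Gamma_{D_{2n},H}$ admits a perfect code if and only if either $H=D_{2n}$, or one of the following holds: (1) $n$ is odd and $H\le\langle a\rangle$; (2) $n$ is even and $H=\langle a^2,b\rangle$, or $H=\langle a^2,ab\rangle$, or $H=\langle a^t\rangle$ for a positive divisor $t$ of $n$ such that either $n/t$ is odd, or $n/t=2$, or $n/t\ge 4$ is even and $t$ is odd.
   Context: For a normal subgroup $H$ of a finite group $G$ with identity $e$, the subgroup sum graph $\Gamma_{G,H}$ is the simple undirected graph with vertex set $G$ in which distinct vertices $x,y$ are adjacent if and only if $xy\in H\setminus\{e\}$. A perfect code in a graph is a set $C$ of vertices that is independent and such that every vertex not in $C$ is adjacent to exactly one vertex of $C$. *)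

theory Defs
  imports "HOL-Algebra.Algebra"
begin

definition ssg_adj :: "('a, 'b) monoid_scheme \<Rightarrow> 'a set \<Rightarrow> 'a \<Rightarrow> 'a \<Rightarrow> bool" where
  "ssg_adj G H x y \<longleftrightarrow> x \<in> carrier G \<and> y \<in> carrier G \<and> x \<noteq> y \<and>
      x \<otimes>\<^bsub>G\<^esub> y \<in> H - {\<one>\<^bsub>G\<^esub>}"

definition ssg_perfect_code :: "('a, 'b) monoid_scheme \<Rightarrow> 'a set \<Rightarrow> 'a set \<Rightarrow> bool" where
  "ssg_perfect_code G H C \<longleftrightarrow> C \<subseteq> carrier G \<and>
      (\<forall>x\<in>C. \<forall>y\<in>C. \<not> ssg_adj G H x y) \<and>
      (\<forall>v\<in>carrier G - C. \<exists>!c. c \<in> C \<and> ssg_adj G H v c)"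

definition ssg_has_perfect_code :: "('a, 'b) monoid_scheme \<Rightarrow> 'a set \<Rightarrow> bool" where
  "ssg_has_perfect_code G H \<longleftrightarrow> (\<exists>C. ssg_perfect_code G H C)"

text \<open>Dihedral group of order 2n: the pair (i, s) with i < n represents a^i b^s
  (s = True meaning b is present). Then a^i b^s * a^j b^t = a^(i +- j) b^(s xor t).\<close>
definition dihedral :: "nat \<Rightarrow> (nat \<times> bool) monoid" where
  "dihedral n = \<lparr> carrier = {0..<n} \<times> UNIV,
     monoid.mult = (\<lambda>(i, s) (j, t). ((i + (if s then n - j else j)) mod n, s \<noteq> t)),
     monoid.one = (0, False) \<rparr>"

definition dih_a :: "nat \<Rightarrow> nat \<times> bool" where "dih_a n = (1 mod n, False)"
definition dih_b :: "nat \<times> bool" where "dih_b = (0, True)"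

end

theory Submission
  imports Defs
begin


definition crit :: "('a,'b) monoid_scheme \<Rightarrow> 'a set \<Rightarrow> bool" where
"crit G H \<longleftrightarrow> card H \<le> 2 \<or> (\<forall>x\<in>carrier G. x \<otimes>\<^bsub>G\<^esub> x \<in> H \<longrightarrow>
    (\<exists>y\<in>carrier G. y \<otimes>\<^bsub>G\<^esub> inv\<^bsub>G\<^esub> x \<in> H \<and> y \<otimes>\<^bsub>G\<^esub> y = \<one>\<^bsub>G\<^esub>))"

definition "Qg G H = G Mod H"
definition "pig G H x = r_coset G H x"
definition "Keyg G H x = {pig G H x, m_inv (Qg G H) (pig G H x)}"
definition "repg G H K = (if \<exists>z. z \<in> carrier G \<and> pig G H z \<in> K \<and> z \<otimes>\<^bsub>G\<^esub> z = \<one>\<^bsub>G\<^esub>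
   then SOME z. z \<in> carrier G \<and> pig G H z \<in> K \<and> z \<otimes>\<^bsub>G\<^esub> z = \<one>\<^bsub>G\<^esub> else SOME z. z \<in> carrier G \<and> pig G H z \<in> K)"
definition "Cg G H = {c \<in> carrier G. c = repg G H (Keyg G H c) \<or> c = inv\<^bsub>G\<^esub> (repg G H (Keyg G H c))}"

locale abs_setup = normal H G for H G +
  assumes fin: "finite (carrier G)"
begin


lemma Qgrp: "group (Qg G H)" unfolding Qg_def by (rule factorgroup_is_group)

lemma pi_c: "x \<in> carrier G \<Longrightarrow> pig G H x \<in> carrier (Qg G H)"
  using r_coset_hom_Mod unfolding hom_def pig_def Qg_def by auto

lemma pi_m: "x \<in> carrier G \<Longrightarrow> y \<in> carrier G \<Longrightarrow> pig G H (x \<otimes>\<^bsub>G\<^esub> y) = monoid.mult (Qg G H) (pig G H x) (pig G H y)"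
  using hom_mult[OF r_coset_hom_Mod] unfolding pig_def Qg_def by auto

lemma pi_1: "x \<in> carrier G \<Longrightarrow> pig G H x = one (Qg G H) \<longleftrightarrow> x \<in> H"
  unfolding pig_def Qg_def one_FactGroup
  using coset_join2 rcos_self subgroup_axioms by metis

lemma pi_inv: "x \<in> carrier G \<Longrightarrow> pig G H (inv\<^bsub>G\<^esub> x) = m_inv (Qg G H) (pig G H x)"
proof -
  assume x: "x \<in> carrier G"
  have "monoid.mult (Qg G H) (pig G H (inv\<^bsub>G\<^esub> x)) (pig G H x) = one (Qg G H)"
    using x pi_m[of "inv\<^bsub>G\<^esub> x" x] pi_1[of "\<one>\<^bsub>G\<^esub>"] by simp
  thus ?thesis using group.inv_equality[OF Qgrp] pi_c x by (metis inv_closed)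
qed

lemma Hm: "x \<in> carrier G \<Longrightarrow> y \<in> carrier G \<Longrightarrow> x \<otimes>\<^bsub>G\<^esub> y \<in> H \<longleftrightarrow> pig G H y = m_inv (Qg G H) (pig G H x)"
proof -
  assume x: "x \<in> carrier G" and y: "y \<in> carrier G"
  have "x \<otimes>\<^bsub>G\<^esub> y \<in> H \<longleftrightarrow> monoid.mult (Qg G H) (pig G H x) (pig G H y) = one (Qg G H)" using pi_1[of "x \<otimes>\<^bsub>G\<^esub> y"] pi_m x y m_closed by simp
  also have "\<dots> \<longleftrightarrow> pig G H y = m_inv (Qg G H) (pig G H x)"
    using group.inv_equality[OF Qgrp] group.inv_comm[OF Qgrp] group.r_inv[OF Qgrp] pi_c x y by metis
  finally show ?thesis .
qed



lemma key_eq: "x \<in> carrier G \<Longrightarrow> y \<in> carrier G \<Longrightarrow> pig G H y \<in> Keyg G H x \<Longrightarrow> Keyg G H y = Keyg G H x"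
  unfolding Keyg_def using group.inv_inv[OF Qgrp] pi_c by auto



lemma rep_in: "x \<in> carrier G \<Longrightarrow> repg G H (Keyg G H x) \<in> carrier G \<and> pig G H (repg G H (Keyg G H x)) \<in> Keyg G H x"
proof -
  assume x: "x \<in> carrier G"
  have e: "\<exists>z. z \<in> carrier G \<and> pig G H z \<in> Keyg G H x" using x unfolding Keyg_def by blast
  show ?thesis unfolding repg_def
    using someI_ex[OF e] someI_ex[of "\<lambda>z. z \<in> carrier G \<and> pig G H z \<in> Keyg G H x \<and> z \<otimes>\<^bsub>G\<^esub> z = \<one>\<^bsub>G\<^esub>"]
    by (auto split: if_splits)
qed

lemma rep_inv: "(\<exists>z. z \<in> carrier G \<and> pig G H z \<in> Keyg G H x \<and> z \<otimes>\<^bsub>G\<^esub> z = \<one>\<^bsub>G\<^esub>) \<Longrightarrow> repg G H (Keyg G H x) \<otimes>\<^bsub>G\<^esub> repg G H (Keyg G H x) = \<one>\<^bsub>G\<^esub>"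
  unfolding repg_def using someI_ex[of "\<lambda>z. z \<in> carrier G \<and> pig G H z \<in> Keyg G H x \<and> z \<otimes>\<^bsub>G\<^esub> z = \<one>\<^bsub>G\<^esub>"] by auto

lemma key_inv: "x \<in> carrier G \<Longrightarrow> Keyg G H (inv\<^bsub>G\<^esub> x) = Keyg G H x"
  using key_eq[of x "inv\<^bsub>G\<^esub> x"] pi_inv[of x] unfolding Keyg_def by auto



lemma rep_C: assumes x: "x \<in> carrier G" shows "repg G H (Keyg G H x) \<in> Cg G H" "inv\<^bsub>G\<^esub> (repg G H (Keyg G H x)) \<in> Cg G H"
proof -
  let ?z = "repg G H (Keyg G H x)"
  have z: "?z \<in> carrier G" "Keyg G H ?z = Keyg G H x" using rep_in[OF x] key_eq x by auto
  show "?z \<in> Cg G H" unfolding Cg_def using z by auto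
  show "inv\<^bsub>G\<^esub> ?z \<in> Cg G H" unfolding Cg_def using z key_inv[of ?z] by auto
qed

lemma C_pair: "c \<in> Cg G H \<Longrightarrow> c' \<in> Cg G H \<Longrightarrow> Keyg G H c' = Keyg G H c \<Longrightarrow>
   c \<in> {repg G H (Keyg G H c), inv\<^bsub>G\<^esub> (repg G H (Keyg G H c))} \<and> c' \<in> {repg G H (Keyg G H c), inv\<^bsub>G\<^esub> (repg G H (Keyg G H c))}"
  unfolding Cg_def by auto

lemma C_car: "Cg G H \<subseteq> carrier G" unfolding Cg_def by auto

lemma adj_key: "v \<in> carrier G \<Longrightarrow> c \<in> carrier G \<Longrightarrow> v \<otimes>\<^bsub>G\<^esub> c \<in> H \<Longrightarrow> Keyg G H c = Keyg G H v"
proof -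
  assume a: "v \<in> carrier G" "c \<in> carrier G" "v \<otimes>\<^bsub>G\<^esub> c \<in> H"
  have "pig G H c = m_inv (Qg G H) (pig G H v)" using Hm a by blast
  hence "pig G H c \<in> Keyg G H v" unfolding Keyg_def by blast
  thus ?thesis using key_eq a by blast
qed

lemma code: assumes cr: "crit G H" shows "ssg_perfect_code G H (Cg G H)"
  unfolding ssg_perfect_code_def
proof (intro conjI ballI)
  show "Cg G H \<subseteq> carrier G" by (rule C_car)
next
  fix x y assume x: "x \<in> Cg G H" and y: "y \<in> Cg G H"
  show "\<not> ssg_adj G H x y"
  proof
    assume a: "ssg_adj G H x y"
    hence xy: "x \<otimes>\<^bsub>G\<^esub> y \<in> H" "x \<otimes>\<^bsub>G\<^esub> y \<noteq> \<one>\<^bsub>G\<^esub>" "x \<noteq> y" and c: "x \<in> carrier G" "y \<in> carrier G"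
      unfolding ssg_adj_def by auto
    have "Keyg G H y = Keyg G H x" using adj_key c xy by auto
    hence xz: "x \<in> {repg G H (Keyg G H x), inv\<^bsub>G\<^esub> (repg G H (Keyg G H x))}" and
      yz: "y \<in> {repg G H (Keyg G H x), inv\<^bsub>G\<^esub> (repg G H (Keyg G H x))}"
      using C_pair x y by auto
    let ?z = "repg G H (Keyg G H x)"
    have zc: "?z \<in> carrier G" using rep_in c by auto
    have 1: "inv\<^bsub>G\<^esub> ?z \<otimes>\<^bsub>G\<^esub> ?z = \<one>\<^bsub>G\<^esub>" "?z \<otimes>\<^bsub>G\<^esub> inv\<^bsub>G\<^esub> ?z = \<one>\<^bsub>G\<^esub>"
      using zc by simp_all
    show False using xz yz xy 1 by auto
  qed
next
  fix v assume v: "v \<in> carrier G - Cg G H"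
  let ?z = "repg G H (Keyg G H v)"
  have vc: "v \<in> carrier G" using v by auto
  have z: "?z \<in> carrier G" "pig G H ?z \<in> Keyg G H v" using rep_in vc by auto
  have zC: "?z \<in> Cg G H" "inv\<^bsub>G\<^esub> ?z \<in> Cg G H" using rep_C vc by auto
  have vz: "v \<noteq> ?z" "v \<noteq> inv\<^bsub>G\<^esub> ?z" using zC v by auto
  have only: "\<And>c. c \<in> Cg G H \<Longrightarrow> ssg_adj G H v c \<Longrightarrow> c = ?z \<or> c = inv\<^bsub>G\<^esub> ?z"
  proof -
    fix c assume c: "c \<in> Cg G H" "ssg_adj G H v c"
    hence "Keyg G H c = Keyg G H v" using adj_key[of v c] unfolding ssg_adj_def by auto
    thus "c = ?z \<or> c = inv\<^bsub>G\<^esub> ?z" using c(1) unfolding Cg_def by auto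
  qed
  show "\<exists>!c. c \<in> Cg G H \<and> ssg_adj G H v c"
  proof (cases "pig G H ?z = m_inv (Qg G H) (pig G H v)")
    case True
    have h: "v \<otimes>\<^bsub>G\<^esub> ?z \<in> H" using Hm vc z True by auto
    have n1: "v \<otimes>\<^bsub>G\<^esub> ?z \<noteq> \<one>\<^bsub>G\<^esub>" using inv_equality[of v ?z] vz vc z by auto
    have adjz: "ssg_adj G H v ?z" unfolding ssg_adj_def using h n1 vz vc z by auto
    have noinv: "\<not> ssg_adj G H v (inv\<^bsub>G\<^esub> ?z)" if ne: "inv\<^bsub>G\<^esub> ?z \<noteq> ?z"
    proof
      assume a: "ssg_adj G H v (inv\<^bsub>G\<^esub> ?z)"
      hence "v \<otimes>\<^bsub>G\<^esub> inv\<^bsub>G\<^esub> ?z \<in> H" unfolding ssg_adj_def by auto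
      hence e: "pig G H (inv\<^bsub>G\<^esub> ?z) = pig G H ?z" using Hm[of v "inv\<^bsub>G\<^esub> ?z"] vc z True by auto
      hence pz: "m_inv (Qg G H) (pig G H ?z) = pig G H ?z" using pi_inv z by auto
      have "pig G H (?z \<otimes>\<^bsub>G\<^esub> ?z) = monoid.mult (Qg G H) (pig G H ?z) (m_inv (Qg G H) (pig G H ?z))"
        using pi_m z pz by simp
      also have "\<dots> = one (Qg G H)" using group.r_inv[OF Qgrp] pi_c z by simp
      finally have "pig G H (?z \<otimes>\<^bsub>G\<^esub> ?z) = one (Qg G H)" .
      hence zz: "?z \<otimes>\<^bsub>G\<^esub> ?z \<in> H" using pi_1 z by auto
      from cr have "card H \<le> 2 \<or> (\<exists>y\<in>carrier G. y \<otimes>\<^bsub>G\<^esub> inv\<^bsub>G\<^esub> ?z \<in> H \<and> y \<otimes>\<^bsub>G\<^esub> y = \<one>\<^bsub>G\<^esub>)"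
        unfolding crit_def using zz z by auto
      thus False
      proof
        assume "card H \<le> 2"
        moreover have "{v, ?z, inv\<^bsub>G\<^esub> ?z} \<subseteq> H #>\<^bsub>G\<^esub> ?z"
        proof -
          have "pig G H v = pig G H ?z" 
          proof -
            have "m_inv (Qg G H) (pig G H ?z) = pig G H v" using True group.inv_inv[OF Qgrp] pi_c vc by simp
            thus ?thesis using pz by simp
          qed
          hence "v \<in> H #>\<^bsub>G\<^esub> ?z" using repr_independenceD[OF subgroup_axioms vc] unfolding pig_def by auto
          moreover have "?z \<in> H #>\<^bsub>G\<^esub> ?z" using rcos_self z subgroup_axioms by auto
          moreover have "inv\<^bsub>G\<^esub> ?z \<in> H #>\<^bsub>G\<^esub> ?z" using repr_independenceD[OF subgroup_axioms, of "inv\<^bsub>G\<^esub> ?z" ?z] e z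
            unfolding pig_def by auto
          ultimately show ?thesis by auto
        qed
        moreover have "card (H #>\<^bsub>G\<^esub> ?z) = card H"
          using card_rcosets_equal[of "H #>\<^bsub>G\<^esub> ?z" H] rcosetsI[of H ?z] z subset by auto
        moreover have "finite (H #>\<^bsub>G\<^esub> ?z)" using r_coset_subset_G[OF subset z(1)] fin finite_subset by blast
        moreover have "card {v, ?z, inv\<^bsub>G\<^esub> ?z} = 3" using vz ne by auto
        ultimately have "3 \<le> card H" using card_mono[of "H #>\<^bsub>G\<^esub> ?z" "{v, ?z, inv\<^bsub>G\<^esub> ?z}"] by simp
        thus False using \<open>card H \<le> 2\<close> by simp
      next
        assume "\<exists>y\<in>carrier G. y \<otimes>\<^bsub>G\<^esub> inv\<^bsub>G\<^esub> ?z \<in> H \<and> y \<otimes>\<^bsub>G\<^esub> y = \<one>\<^bsub>G\<^esub>"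
        then obtain y where y: "y \<in> carrier G" "y \<otimes>\<^bsub>G\<^esub> inv\<^bsub>G\<^esub> ?z \<in> H" "y \<otimes>\<^bsub>G\<^esub> y = \<one>\<^bsub>G\<^esub>" by auto
        have "m_inv (Qg G H) (pig G H ?z) = m_inv (Qg G H) (pig G H y)"
          using y Hm[of y "inv\<^bsub>G\<^esub> ?z"] pi_inv z by simp
        hence "m_inv (Qg G H) (m_inv (Qg G H) (pig G H ?z)) = m_inv (Qg G H) (m_inv (Qg G H) (pig G H y))" by simp
        hence "pig G H y = pig G H ?z" using group.inv_inv[OF Qgrp] pi_c y z by simp
        hence "pig G H y \<in> Keyg G H v" using z by auto
        hence "?z \<otimes>\<^bsub>G\<^esub> ?z = \<one>\<^bsub>G\<^esub>" using rep_inv[of v] y by blast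
        hence "inv\<^bsub>G\<^esub> ?z = ?z" using inv_equality z by auto
        thus False using ne by auto
      qed
    qed
    show ?thesis
    proof (rule ex1I[of _ ?z])
      show "?z \<in> Cg G H \<and> ssg_adj G H v ?z" using zC adjz by auto
      fix c assume "c \<in> Cg G H \<and> ssg_adj G H v c"
      thus "c = ?z" using only noinv by blast
    qed
  next
    case False
    hence pv: "pig G H ?z = pig G H v" using z unfolding Keyg_def by auto
    have h: "v \<otimes>\<^bsub>G\<^esub> inv\<^bsub>G\<^esub> ?z \<in> H" using Hm[of v "inv\<^bsub>G\<^esub> ?z"] vc z pv pi_inv by auto
    have n1: "v \<otimes>\<^bsub>G\<^esub> inv\<^bsub>G\<^esub> ?z \<noteq> \<one>\<^bsub>G\<^esub>" using inv_equality[of v "inv\<^bsub>G\<^esub> ?z"] vz vc z by auto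
    have adjz: "ssg_adj G H v (inv\<^bsub>G\<^esub> ?z)" unfolding ssg_adj_def using h n1 vz vc z by auto
    have noz: "\<not> ssg_adj G H v ?z"
      using Hm[of v ?z] vc z False unfolding ssg_adj_def by auto
    show ?thesis
    proof (rule ex1I[of _ "inv\<^bsub>G\<^esub> ?z"])
      show "inv\<^bsub>G\<^esub> ?z \<in> Cg G H \<and> ssg_adj G H v (inv\<^bsub>G\<^esub> ?z)" using zC adjz by auto
      fix c assume "c \<in> Cg G H \<and> ssg_adj G H v c"
      thus "c = inv\<^bsub>G\<^esub> ?z" using only noz by blast
    qed
  qed
qed


lemma obstr: assumes pc: "ssg_perfect_code G H C0" shows "crit G H"
proof (rule ccontr)
  assume nc: "\<not> crit G H"
  hence cH: "card H > 2" unfolding crit_def by auto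
  from nc obtain x where x: "x \<in> carrier G" "x \<otimes>\<^bsub>G\<^esub> x \<in> H"
    and noinv: "\<And>y. y \<in> carrier G \<Longrightarrow> y \<otimes>\<^bsub>G\<^esub> inv\<^bsub>G\<^esub> x \<in> H \<Longrightarrow> y \<otimes>\<^bsub>G\<^esub> y \<noteq> \<one>\<^bsub>G\<^esub>"
    unfolding crit_def by auto
  have ind: "\<And>a b. a \<in> C0 \<Longrightarrow> b \<in> C0 \<Longrightarrow> \<not> ssg_adj G H a b"
    and dom: "\<And>v. v \<in> carrier G - C0 \<Longrightarrow> \<exists>!c. c \<in> C0 \<and> ssg_adj G H v c"
    and C0c: "C0 \<subseteq> carrier G"
    using pc unfolding ssg_perfect_code_def by auto
  define K where "K = H #>\<^bsub>G\<^esub> x"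
  have Kpi: "\<And>u. u \<in> K \<longleftrightarrow> u \<in> carrier G \<and> pig G H u = pig G H x"
  proof -
    fix u
    show "u \<in> K \<longleftrightarrow> u \<in> carrier G \<and> pig G H u = pig G H x"
    proof
      assume u: "u \<in> K"
      hence uc: "u \<in> carrier G" unfolding K_def using r_coset_subset_G[OF subset x(1)] by auto
      have "H #>\<^bsub>G\<^esub> x = H #>\<^bsub>G\<^esub> u" using repr_independence[of u H x] u x subgroup_axioms
        unfolding K_def by auto
      thus "u \<in> carrier G \<and> pig G H u = pig G H x" using uc unfolding pig_def by auto
    next
      assume "u \<in> carrier G \<and> pig G H u = pig G H x"
      thus "u \<in> K" using repr_independenceD[OF subgroup_axioms, of u x] unfolding K_def pig_def by auto
    qed
  qed
  have pxx: "monoid.mult (Qg G H) (pig G H x) (pig G H x) = one (Qg G H)"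
    using pi_m[of x x] pi_1[of "x \<otimes>\<^bsub>G\<^esub> x"] x by simp
  have pxi: "m_inv (Qg G H) (pig G H x) = pig G H x"
    using group.inv_equality[OF Qgrp pxx] pi_c x by simp
  have Kprod: "\<And>u w. u \<in> K \<Longrightarrow> w \<in> K \<Longrightarrow> u \<otimes>\<^bsub>G\<^esub> w \<in> H"
  proof -
    fix u w assume u: "u \<in> K" and w: "w \<in> K"
    have "u \<in> carrier G" "pig G H u = pig G H x" "w \<in> carrier G" "pig G H w = pig G H x"
      using u w Kpi by blast+
    thus "u \<otimes>\<^bsub>G\<^esub> w \<in> H" using Hm[of u w] pxi by simp
  qed
  have Kclosed: "\<And>u c. u \<in> K \<Longrightarrow> c \<in> carrier G \<Longrightarrow> u \<otimes>\<^bsub>G\<^esub> c \<in> H \<Longrightarrow> c \<in> K"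
  proof -
    fix u c assume u: "u \<in> K" and c: "c \<in> carrier G" and h: "u \<otimes>\<^bsub>G\<^esub> c \<in> H"
    have "u \<in> carrier G" "pig G H u = pig G H x" using u Kpi by blast+
    hence "pig G H c = pig G H x" using Hm[of u c] pxi c h by simp
    thus "c \<in> K" using Kpi c by blast
  qed
  have Kinv: "\<And>u. u \<in> K \<Longrightarrow> inv\<^bsub>G\<^esub> u \<in> K"
  proof -
    fix u assume u: "u \<in> K"
    have "u \<in> carrier G" "pig G H u = pig G H x" using u Kpi by blast+
    hence "pig G H (inv\<^bsub>G\<^esub> u) = pig G H x" using pi_inv pxi by simp
    thus "inv\<^bsub>G\<^esub> u \<in> K" using Kpi \<open>u \<in> carrier G\<close> by simp
  qed
  have Kno: "\<And>u. u \<in> K \<Longrightarrow> u \<otimes>\<^bsub>G\<^esub> u \<noteq> \<one>\<^bsub>G\<^esub>"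
  proof -
    fix u assume u: "u \<in> K"
    hence "u \<in> carrier G" "u \<otimes>\<^bsub>G\<^esub> inv\<^bsub>G\<^esub> x \<in> H"
      using Kpi rcos_module_imp[OF is_group x(1)] u unfolding K_def by auto
    thus "u \<otimes>\<^bsub>G\<^esub> u \<noteq> \<one>\<^bsub>G\<^esub>" using noinv by auto
  qed
  have cardK: "card K = card H"
    using card_rcosets_equal[OF rcosetsI[OF subset x(1)] subset] unfolding K_def by simp
  have Ksub: "K \<subseteq> carrier G" using Kpi by blast
  have finK: "finite K" using finite_subset[OF Ksub fin] .
  obtain c where c: "c \<in> C0" "c \<in> K"
  proof (cases "x \<in> C0")
    case True
    moreover have "x \<in> K" using Kpi x by auto
    ultimately show ?thesis using that by auto
  next
    case False
    have "\<exists>!c. c \<in> C0 \<and> ssg_adj G H x c" using dom[of x] x False by blast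
    then obtain c where "c \<in> C0" "ssg_adj G H x c" by (auto dest: ex1_implies_ex)
    moreover have "x \<in> K" using Kpi x by blast
    moreover have "c \<in> K" using Kclosed[OF \<open>x \<in> K\<close>] \<open>ssg_adj G H x c\<close> unfolding ssg_adj_def by blast
    ultimately show ?thesis using that by auto
  qed
  have cc: "c \<in> carrier G" using c Ksub by blast
  have cinv: "c \<noteq> inv\<^bsub>G\<^esub> c"
  proof
    assume "c = inv\<^bsub>G\<^esub> c"
    hence "c \<otimes>\<^bsub>G\<^esub> c = c \<otimes>\<^bsub>G\<^esub> inv\<^bsub>G\<^esub> c" by simp
    hence "c \<otimes>\<^bsub>G\<^esub> c = \<one>\<^bsub>G\<^esub>" using cc r_inv[of c] by simp
    thus False using Kno c by auto
  qed
  obtain w where w: "w \<in> K" "w \<noteq> c" "w \<noteq> inv\<^bsub>G\<^esub> c"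
  proof -
    have "\<not> K \<subseteq> {c, inv\<^bsub>G\<^esub> c}"
    proof
      assume "K \<subseteq> {c, inv\<^bsub>G\<^esub> c}"
      hence "card K \<le> card {c, inv\<^bsub>G\<^esub> c}" by (rule card_mono[rotated]) simp
      also have "\<dots> \<le> 2" by (simp add: card_insert_if)
      finally show False using cardK cH by simp
    qed
    thus ?thesis using that by auto
  qed
  have wc: "w \<in> carrier G" using w Ksub by blast
  have ic: "inv\<^bsub>G\<^esub> c \<in> K" "inv\<^bsub>G\<^esub> c \<in> carrier G" using Kinv c cc by auto
  have adjwc: "ssg_adj G H w c"
    unfolding ssg_adj_def using wc cc w Kprod[of w c] c inv_equality[of w c] by auto
  have wC: "w \<notin> C0" using ind adjwc c by auto
  show False
  proof (cases "inv\<^bsub>G\<^esub> c \<in> C0")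
    case True
    have "w \<otimes>\<^bsub>G\<^esub> inv\<^bsub>G\<^esub> c \<noteq> \<one>\<^bsub>G\<^esub>"
    proof
      assume "w \<otimes>\<^bsub>G\<^esub> inv\<^bsub>G\<^esub> c = \<one>\<^bsub>G\<^esub>"
      hence "inv\<^bsub>G\<^esub> (inv\<^bsub>G\<^esub> c) = w" using inv_equality ic wc by auto
      thus False using w cc by simp
    qed
    hence "ssg_adj G H w (inv\<^bsub>G\<^esub> c)"
      unfolding ssg_adj_def using wc ic w Kprod[of w "inv\<^bsub>G\<^esub> c"] by auto
    thus False using dom[of w] wc wC adjwc True c cinv by blast
  next
    case False
    then obtain c' where c': "c' \<in> C0" "ssg_adj G H (inv\<^bsub>G\<^esub> c) c'" using dom[of "inv\<^bsub>G\<^esub> c"] ic by blast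
    have c'c: "c' \<in> carrier G" and h: "inv\<^bsub>G\<^esub> c \<otimes>\<^bsub>G\<^esub> c' \<in> H" "inv\<^bsub>G\<^esub> c \<otimes>\<^bsub>G\<^esub> c' \<noteq> \<one>\<^bsub>G\<^esub>" "inv\<^bsub>G\<^esub> c \<noteq> c'"
      using c' unfolding ssg_adj_def by auto
    have c'K: "c' \<in> K" using Kclosed[OF ic(1) c'c h(1)] .
    have "c' \<noteq> c" using h(2) cc by auto
    moreover have "c \<otimes>\<^bsub>G\<^esub> c' \<noteq> \<one>\<^bsub>G\<^esub>"
    proof
      assume "c \<otimes>\<^bsub>G\<^esub> c' = \<one>\<^bsub>G\<^esub>"
      hence "c' \<otimes>\<^bsub>G\<^esub> c = \<one>\<^bsub>G\<^esub>" using inv_comm cc c'c by auto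
      hence "inv\<^bsub>G\<^esub> c = c'" using inv_equality cc c'c by auto
      thus False using h(3) by simp
    qed
    ultimately have "ssg_adj G H c c'" unfolding ssg_adj_def using cc c'c Kprod[OF c(2) c'K] by auto
    thus False using ind c c' by auto
  qed
qed

lemma code_iff: "ssg_has_perfect_code G H \<longleftrightarrow> crit G H"
  unfolding ssg_has_perfect_code_def using code obstr by blast

end




definition Rk :: "nat \<Rightarrow> int \<Rightarrow> nat \<times> bool" where "Rk n k = (nat (k mod int n), False)"
definition Sk :: "nat \<Rightarrow> int \<Rightarrow> nat \<times> bool" where "Sk n k = (nat (k mod int n), True)"

lemma nat_eqI: "int a = b \<Longrightarrow> a = nat b" by auto

lemma car_D: "carrier (dihedral n) = {0..<n} \<times> UNIV" unfolding dihedral_def by simp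
lemma mult_D: "(i, s) \<otimes>\<^bsub>dihedral n\<^esub> (j, t) = ((i + (if s then n - j else j)) mod n, s \<noteq> t)"
  unfolding dihedral_def by simp
lemma one_D: "\<one>\<^bsub>dihedral n\<^esub> = (0, False)" unfolding dihedral_def by simp

lemma Rk_car: "n > 0 \<Longrightarrow> Rk n k \<in> carrier (dihedral n)"
  unfolding car_D Rk_def by (simp add: nat_less_iff)
lemma Sk_car: "n > 0 \<Longrightarrow> Sk n k \<in> carrier (dihedral n)"
  unfolding car_D Sk_def by (simp add: nat_less_iff)

lemma car_cases:
  assumes "x \<in> carrier (dihedral n)"
  obtains k where "x = Rk n k" | k where "x = Sk n k"
proof -
  obtain i s where x: "x = (i, s)" "i < n" using assms unfolding car_D by auto
  have i: "nat (int i mod int n) = i" using x(2) by (simp add: zmod_int[symmetric])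
  show ?thesis
  proof (cases s)
    case True thus ?thesis using that(2)[of "int i"] x i unfolding Sk_def by auto
  next
    case False thus ?thesis using that(1)[of "int i"] x i unfolding Rk_def by auto
  qed
qed

lemma Rk_eq: "n > 0 \<Longrightarrow> Rk n k = Rk n l \<longleftrightarrow> k mod int n = l mod int n"
  unfolding Rk_def by (auto simp: eq_nat_nat_iff)
lemma Sk_eq: "n > 0 \<Longrightarrow> Sk n k = Sk n l \<longleftrightarrow> k mod int n = l mod int n"
  unfolding Sk_def by (auto simp: eq_nat_nat_iff)
lemma RS_neq[simp]: "Rk n k \<noteq> Sk n l" "Sk n l \<noteq> Rk n k"
  unfolding Rk_def Sk_def by auto
lemma one_Rk: "\<one>\<^bsub>dihedral n\<^esub> = Rk n 0" unfolding one_D Rk_def by simp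

lemma int_sub_mod: "b \<le> n \<Longrightarrow> int (n - b) = int n - int b" by simp

lemma RR: "n > 0 \<Longrightarrow> Rk n k \<otimes>\<^bsub>dihedral n\<^esub> Rk n l = Rk n (k + l)"
  unfolding Rk_def mult_D
  by (simp add: nat_eq_iff2 zmod_int nat_mod_distrib[symmetric] mod_add_eq) 

lemma RS: "n > 0 \<Longrightarrow> Rk n k \<otimes>\<^bsub>dihedral n\<^esub> Sk n l = Sk n (k + l)"
  unfolding Rk_def Sk_def mult_D
  by (simp add: nat_eq_iff2 zmod_int nat_mod_distrib[symmetric] mod_add_eq)

lemma SR: "n > 0 \<Longrightarrow> Sk n k \<otimes>\<^bsub>dihedral n\<^esub> Rk n l = Sk n (k - l)"
proof -
  assume n: "n > 0"
  have le: "nat (l mod int n) \<le> n" using n by (simp add: nat_le_iff less_imp_le)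
  have "int ((nat (k mod int n) + (n - nat (l mod int n))) mod n) = (k mod int n + (int n - l mod int n)) mod int n"
    using le n by (simp add: zmod_int of_nat_diff add_diff_eq)
  also have "\<dots> = (k - l) mod int n"
  proof -
    have "(k mod int n + (int n - l mod int n)) mod int n = (k mod int n - l mod int n + int n) mod int n"
      by (simp add: algebra_simps)
    also have "\<dots> = (k mod int n - l mod int n) mod int n" by simp
    also have "\<dots> = (k - l) mod int n" by (simp add: mod_diff_eq)
    finally show ?thesis .
  qed
  finally show ?thesis unfolding Rk_def Sk_def mult_D by (simp add: nat_eq_iff2)
qed

lemma SS: "n > 0 \<Longrightarrow> Sk n k \<otimes>\<^bsub>dihedral n\<^esub> Sk n l = Rk n (k - l)"
proof -
  assume n: "n > 0"
  have le: "nat (l mod int n) \<le> n" using n by (simp add: nat_le_iff less_imp_le)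
  have "int ((nat (k mod int n) + (n - nat (l mod int n))) mod n) = (k mod int n + (int n - l mod int n)) mod int n"
    using le n by (simp add: zmod_int of_nat_diff add_diff_eq)
  also have "\<dots> = (k - l) mod int n"
  proof -
    have "(k mod int n + (int n - l mod int n)) mod int n = (k mod int n - l mod int n + int n) mod int n"
      by (simp add: algebra_simps)
    also have "\<dots> = (k mod int n - l mod int n) mod int n" by simp
    also have "\<dots> = (k - l) mod int n" by (simp add: mod_diff_eq)
    finally show ?thesis .
  qed
  finally show ?thesis unfolding Rk_def Sk_def mult_D by (simp add: nat_eq_iff2)
qed


lemma R_nat: "i < n \<Longrightarrow> (i, False) = Rk n (int i)"
  unfolding Rk_def by (simp add: zmod_int[symmetric])
lemma S_nat: "i < n \<Longrightarrow> (i, True) = Sk n (int i)"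
  unfolding Sk_def by (simp add: zmod_int[symmetric])

lemma inv_R: "group (dihedral n) \<Longrightarrow> n > 0 \<Longrightarrow> inv\<^bsub>dihedral n\<^esub> (Rk n k) = Rk n (- k)"
  by (rule group.inv_equality) (auto simp: RR one_Rk Rk_car)
lemma inv_S: "group (dihedral n) \<Longrightarrow> n > 0 \<Longrightarrow> inv\<^bsub>dihedral n\<^esub> (Sk n k) = Sk n k"
  by (rule group.inv_equality) (auto simp: SS one_Rk Sk_car)

lemma pow_R: "group (dihedral n) \<Longrightarrow> n > 0 \<Longrightarrow> Rk n k [^]\<^bsub>dihedral n\<^esub> (m::nat) = Rk n (k * int m)"
proof (induction m)
  case 0
  then show ?case using monoid.nat_pow_0[OF group.is_monoid[OF 0(1)]] one_Rk by simp
next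
  case (Suc m)
  then show ?case using monoid.nat_pow_Suc[OF group.is_monoid[OF Suc(2)]] RR
    by (simp add: algebra_simps)
qed

lemma a_R: "n > 0 \<Longrightarrow> dih_a n = Rk n 1"
  unfolding dih_a_def Rk_def by (simp add: zmod_int[symmetric])
lemma b_S: "dih_b = Sk n 0"
  unfolding dih_b_def Sk_def by simp

lemma dvd_fstR: "d dvd n \<Longrightarrow> n > 0 \<Longrightarrow> d dvd fst (Rk n k) \<longleftrightarrow> int d dvd k"
proof -
  assume d: "d dvd n" and n: "n > 0"
  have e: "int (nat (k mod int n)) = k mod int n" using n by simp
  have "d dvd fst (Rk n k) \<longleftrightarrow> int d dvd int (nat (k mod int n))" unfolding Rk_def by (simp only: fst_conv int_dvd_int_iff)
  also have "\<dots> \<longleftrightarrow> int d dvd k mod int n" by (simp only: e)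
  also have "\<dots> \<longleftrightarrow> int d dvd k" using d by (simp add: dvd_mod_iff)
  finally show ?thesis .
qed
lemma dvd_fstS: "d dvd n \<Longrightarrow> n > 0 \<Longrightarrow> d dvd fst (Sk n k) \<longleftrightarrow> int d dvd k"
  using dvd_fstR[of d n k] unfolding Rk_def Sk_def by simp

definition Rot :: "nat \<Rightarrow> nat \<Rightarrow> (nat \<times> bool) set" where
  "Rot n d = {x \<in> carrier (dihedral n). \<not> snd x \<and> d dvd fst x}"
definition E0 :: "nat \<Rightarrow> (nat \<times> bool) set" where
  "E0 n = {x \<in> carrier (dihedral n). even (fst x)}"
definition E1 :: "nat \<Rightarrow> (nat \<times> bool) set" where
  "E1 n = {x \<in> carrier (dihedral n). even (fst x) = (\<not> snd x)}"

lemma Rot_R[simp]: "d dvd n \<Longrightarrow> n > 0 \<Longrightarrow> Rk n k \<in> Rot n d \<longleftrightarrow> int d dvd k"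
  unfolding Rot_def using dvd_fstR[of d n k] Rk_car[of n k] by (simp add: Rk_def)
lemma Rot_S[simp]: "Sk n k \<notin> Rot n d"
  unfolding Rot_def Sk_def by simp
lemma E0_R[simp]: "even n \<Longrightarrow> n > 0 \<Longrightarrow> Rk n k \<in> E0 n \<longleftrightarrow> even k"
  unfolding E0_def using dvd_fstR[of 2 n k] Rk_car[of n k] by simp
lemma E0_S[simp]: "even n \<Longrightarrow> n > 0 \<Longrightarrow> Sk n k \<in> E0 n \<longleftrightarrow> even k"
  unfolding E0_def using dvd_fstS[of 2 n k] Sk_car[of n k] by simp
lemma E1_R[simp]: "even n \<Longrightarrow> n > 0 \<Longrightarrow> Rk n k \<in> E1 n \<longleftrightarrow> even k"
  unfolding E1_def using dvd_fstR[of 2 n k] Rk_car[of n k] by (simp add: Rk_def)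
lemma E1_S[simp]: "even n \<Longrightarrow> n > 0 \<Longrightarrow> Sk n k \<in> E1 n \<longleftrightarrow> odd k"
  unfolding E1_def using dvd_fstS[of 2 n k] Sk_car[of n k] by (simp add: Sk_def)

lemma Rot_sub: "Rot n d \<subseteq> carrier (dihedral n)" unfolding Rot_def by auto
lemma E0_sub: "E0 n \<subseteq> carrier (dihedral n)" unfolding E0_def by auto
lemma E1_sub: "E1 n \<subseteq> carrier (dihedral n)" unfolding E1_def by auto

lemma sub_D:
  assumes g: "group (dihedral n)" and n: "n > 0" and S: "S \<subseteq> carrier (dihedral n)" "Rk n 0 \<in> S"
    and m: "\<And>k l. Rk n k \<in> S \<Longrightarrow> Rk n l \<in> S \<Longrightarrow> Rk n (k + l) \<in> S"
    and m2: "\<And>k l. Rk n k \<in> S \<Longrightarrow> Sk n l \<in> S \<Longrightarrow> Sk n (k + l) \<in> S"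
    and m3: "\<And>k l. Sk n k \<in> S \<Longrightarrow> Rk n l \<in> S \<Longrightarrow> Sk n (k - l) \<in> S"
    and m4: "\<And>k l. Sk n k \<in> S \<Longrightarrow> Sk n l \<in> S \<Longrightarrow> Rk n (k - l) \<in> S"
    and i: "\<And>k. Rk n k \<in> S \<Longrightarrow> Rk n (- k) \<in> S"
  shows "subgroup S (dihedral n)"
proof (rule group.subgroupI[OF g S(1)])
  show "S \<noteq> {}" using S by auto
  fix a assume a: "a \<in> S"
  hence "a \<in> carrier (dihedral n)" using S by auto
  thus "inv\<^bsub>dihedral n\<^esub> a \<in> S"
    by (cases rule: car_cases) (use a i inv_R[OF g n] inv_S[OF g n] in auto)
next
  fix a b assume a: "a \<in> S" and b: "b \<in> S"
  have ac: "a \<in> carrier (dihedral n)" and bc: "b \<in> carrier (dihedral n)" using a b S by auto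
  show "a \<otimes>\<^bsub>dihedral n\<^esub> b \<in> S"
  proof (cases rule: car_cases[OF ac])
    case 1
    then show ?thesis by (cases rule: car_cases[OF bc]) (use a b m m2 RR[OF n] RS[OF n] in auto)
  next
    case 2
    then show ?thesis by (cases rule: car_cases[OF bc]) (use a b m3 m4 SR[OF n] SS[OF n] in auto)
  qed
qed

lemma Rot_sg: "group (dihedral n) \<Longrightarrow> n > 0 \<Longrightarrow> d dvd n \<Longrightarrow> subgroup (Rot n d) (dihedral n)"
  by (rule sub_D) (auto simp: Rot_sub)
lemma E0_sg: "group (dihedral n) \<Longrightarrow> n > 0 \<Longrightarrow> even n \<Longrightarrow> subgroup (E0 n) (dihedral n)"
  by (rule sub_D) (auto simp: E0_sub)
lemma E1_sg: "group (dihedral n) \<Longrightarrow> n > 0 \<Longrightarrow> even n \<Longrightarrow> subgroup (E1 n) (dihedral n)"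
  by (rule sub_D) (auto simp: E1_sub)


lemma gen_pow:
  assumes g: "group (dihedral n)" and n: "n > 0" and S: "S \<subseteq> carrier (dihedral n)"
    and c: "Rk n c \<in> generate (dihedral n) S"
  shows "Rk n (c * int q) \<in> generate (dihedral n) S"
proof (induction q)
  case 0
  show ?case using generate.one[of "dihedral n" S] one_Rk by simp
next
  case (Suc q)
  have "Rk n (c * int q) \<otimes>\<^bsub>dihedral n\<^esub> Rk n c \<in> generate (dihedral n) S"
    by (rule generate.eng[OF Suc c])
  thus ?case using RR[OF n] by (simp add: algebra_simps)
qed

lemma gen_Rot:
  assumes g: "group (dihedral n)" and n: "n > 0" and t: "t dvd n"
  shows "generate (dihedral n) {Rk n (int t)} = Rot n t"
proof
  show "generate (dihedral n) {Rk n (int t)} \<subseteq> Rot n t"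
    by (rule group.generate_subgroup_incl[OF g _ Rot_sg[OF g n t]]) (simp add: n t)
next
  show "Rot n t \<subseteq> generate (dihedral n) {Rk n (int t)}"
  proof
    fix x assume x: "x \<in> Rot n t"
    then obtain i where i: "x = (i, False)" "i < n" "t dvd i" unfolding Rot_def car_D by auto
    then obtain q where q: "i = t * q" by auto
    have "x = Rk n (int t * int q)" using i q R_nat by simp
    moreover have "Rk n (int t * int q) \<in> generate (dihedral n) {Rk n (int t)}"
      by (rule gen_pow[OF g n]) (auto intro: generate.incl simp: Rk_car n)
    ultimately show "x \<in> generate (dihedral n) {Rk n (int t)}" by simp
  qed
qed

lemma gen_E0:
  assumes g: "group (dihedral n)" and n: "n > 0" and e: "even n"
  shows "generate (dihedral n) {Rk n 2, Sk n 0} = E0 n"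
proof
  show "generate (dihedral n) {Rk n 2, Sk n 0} \<subseteq> E0 n"
    by (rule group.generate_subgroup_incl[OF g _ E0_sg[OF g n e]]) (simp add: n e)
next
  let ?S = "{Rk n 2, Sk n 0}"
  have Sc: "?S \<subseteq> carrier (dihedral n)" using Rk_car Sk_car n by auto
  show "E0 n \<subseteq> generate (dihedral n) ?S"
  proof
    fix x assume x: "x \<in> E0 n"
    then obtain i s where i: "x = (i, s)" "i < n" "even i" unfolding E0_def car_D by auto
    then obtain q where q: "i = 2 * q" by auto
    have r: "Rk n (2 * int q) \<in> generate (dihedral n) ?S"
      by (rule gen_pow[OF g n Sc]) (auto intro: generate.incl)
    show "x \<in> generate (dihedral n) ?S"
    proof (cases s)
      case False
      thus ?thesis using i q R_nat r by simp
    next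
      case True
      have "Rk n (2 * int q) \<otimes>\<^bsub>dihedral n\<^esub> Sk n 0 \<in> generate (dihedral n) ?S"
        by (rule generate.eng[OF r]) (auto intro: generate.incl)
      thus ?thesis using i q S_nat True RS[OF n] by simp
    qed
  qed
qed

lemma gen_E1:
  assumes g: "group (dihedral n)" and n: "n > 0" and e: "even n"
  shows "generate (dihedral n) {Rk n 2, Sk n 1} = E1 n"
proof
  show "generate (dihedral n) {Rk n 2, Sk n 1} \<subseteq> E1 n"
    by (rule group.generate_subgroup_incl[OF g _ E1_sg[OF g n e]]) (simp add: n e)
next
  let ?S = "{Rk n 2, Sk n 1}"
  have Sc: "?S \<subseteq> carrier (dihedral n)" using Rk_car Sk_car n by auto
  show "E1 n \<subseteq> generate (dihedral n) ?S"
  proof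
    fix x assume x: "x \<in> E1 n"
    then obtain i s where i: "x = (i, s)" "i < n" "even i = (\<not> s)" unfolding E1_def car_D by auto
    show "x \<in> generate (dihedral n) ?S"
    proof (cases s)
      case False
      then obtain q where q: "i = 2 * q" using i by auto
      have r: "Rk n (2 * int q) \<in> generate (dihedral n) ?S"
        by (rule gen_pow[OF g n Sc]) (auto intro: generate.incl)
      thus ?thesis using i q R_nat False by simp
    next
      case True
      then obtain q where q: "i = 2 * q + 1" using i by (metis oddE)
      have r: "Rk n (2 * int q) \<in> generate (dihedral n) ?S"
        by (rule gen_pow[OF g n Sc]) (auto intro: generate.incl)
      have "Rk n (2 * int q) \<otimes>\<^bsub>dihedral n\<^esub> Sk n 1 \<in> generate (dihedral n) ?S"
        by (rule generate.eng[OF r]) (auto intro: generate.incl)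
      thus ?thesis using i q S_nat True RS[OF n] by (simp add: add.commute)
    qed
  qed
qed


lemma sg_pow:
  assumes n: "n > 0" and sg: "subgroup H (dihedral n)" and c: "Rk n c \<in> H"
  shows "Rk n (c * int q) \<in> H"
proof (induction q)
  case 0
  show ?case using subgroup.one_closed[OF sg] one_Rk by simp
next
  case (Suc q)
  have "Rk n (c * int q) \<otimes>\<^bsub>dihedral n\<^esub> Rk n c \<in> H"
    by (rule subgroup.m_closed[OF sg Suc c])
  thus ?case using RR[OF n] by (simp add: algebra_simps)
qed

lemma rot_class:
  assumes g: "group (dihedral n)" and n: "n > 0" and sg: "subgroup H (dihedral n)"
    and noS: "\<And>k. Sk n k \<notin> H"
  shows "\<exists>d. d > 0 \<and> d dvd n \<and> H = Rot n d"
proof -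
  define I where "I = {k::int. Rk n k \<in> H}"
  have I0: "0 \<in> I" unfolding I_def using subgroup.one_closed[OF sg] one_Rk by simp
  have Isub: "\<And>k l. k \<in> I \<Longrightarrow> l \<in> I \<Longrightarrow> k - l \<in> I"
  proof -
    fix k l assume "k \<in> I" "l \<in> I"
    hence "Rk n k \<in> H" "inv\<^bsub>dihedral n\<^esub> (Rk n l) \<in> H" using subgroup.m_inv_closed[OF sg] unfolding I_def by auto
    hence "Rk n k \<otimes>\<^bsub>dihedral n\<^esub> Rk n (- l) \<in> H" using subgroup.m_closed[OF sg] inv_R[OF g n] by auto
    thus "k - l \<in> I" using RR[OF n] unfolding I_def by simp
  qed
  have In: "int n \<in> I" using I0 Rk_eq[OF n, of "int n" 0] unfolding I_def by simp
  have Imult: "\<And>c q. c \<in> I \<Longrightarrow> c * q \<in> I"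
  proof -
    fix c q assume c: "c \<in> I"
    have pos: "c * int m \<in> I" for m
      using sg_pow[OF n sg, of c m] c unfolding I_def by simp
    show "c * q \<in> I"
    proof (cases "q \<ge> 0")
      case True thus ?thesis using pos[of "nat q"] by simp
    next
      case False
      have "0 - c * int (nat (- q)) \<in> I" using Isub[OF I0 pos] .
      thus ?thesis using False by simp
    qed
  qed
  define d where "d = (LEAST m::nat. 0 < m \<and> int m \<in> I)"
  have dex: "0 < d \<and> int d \<in> I" unfolding d_def by (rule LeastI[of _ n]) (use n In in auto)
  have dmin: "\<And>m. 0 < m \<Longrightarrow> int m \<in> I \<Longrightarrow> d \<le> m" unfolding d_def by (rule Least_le) auto
  have Ichar: "\<And>k. k \<in> I \<longleftrightarrow> int d dvd k"
  proof
    fix k assume k: "k \<in> I"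
    define r where "r = k mod int d"
    have r: "r = k - int d * (k div int d)" unfolding r_def by (simp add: minus_div_mult_eq_mod[symmetric])
    have rI: "r \<in> I" unfolding r using Isub[OF k Imult[OF conjunct2[OF dex]]] .
    have r0: "0 \<le> r" "r < int d" unfolding r_def using dex by auto
    show "int d dvd k"
    proof (rule ccontr)
      assume "\<not> int d dvd k"
      hence "r \<noteq> 0" unfolding r_def by auto
      hence "0 < nat r" "int (nat r) \<in> I" using r0 rI by auto
      hence "d \<le> nat r" by (rule dmin)
      thus False using r0 by auto
    qed
  next
    fix k assume "int d dvd k"
    then obtain q where "k = int d * q" by auto
    thus "k \<in> I" using Imult dex by auto
  qed
  have dn: "d dvd n" using Ichar[of "int n"] In by simp
  have "H = Rot n d"
  proof
    show "H \<subseteq> Rot n d"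
    proof
      fix x assume x: "x \<in> H"
      hence "x \<in> carrier (dihedral n)" using subgroup.subset[OF sg] by auto
      thus "x \<in> Rot n d"
        by (cases rule: car_cases) (use x noS Ichar dn n in \<open>auto simp: I_def\<close>)
    qed
  next
    show "Rot n d \<subseteq> H"
    proof
      fix x assume x: "x \<in> Rot n d"
      hence "x \<in> carrier (dihedral n)" using Rot_sub by auto
      thus "x \<in> H"
        by (cases rule: car_cases) (use x Ichar dn n in \<open>auto simp: I_def\<close>)
    qed
  qed
  thus ?thesis using dex dn by auto
qed

lemma refl_conj:
  assumes N: "H \<lhd> dihedral n" and n: "n > 0" and j: "Sk n j \<in> H"
  shows "Rk n (2 * k) \<in> H" "Sk n (j + 2 * k) \<in> H"
proof -
  have g: "group (dihedral n)" using N by (simp add: normal_def)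
  have sg: "subgroup H (dihedral n)" using N by (simp add: normal_def)
  have "Rk n k \<otimes>\<^bsub>dihedral n\<^esub> Sk n j \<otimes>\<^bsub>dihedral n\<^esub> inv\<^bsub>dihedral n\<^esub> (Rk n k) \<in> H"
    by (rule normal.inv_op_closed2[OF N Rk_car[OF n] j])
  thus s: "Sk n (j + 2 * k) \<in> H" using inv_R[OF g n] RS[OF n] SR[OF n] by (simp add: algebra_simps)
  have "Sk n (j + 2 * k) \<otimes>\<^bsub>dihedral n\<^esub> Sk n j \<in> H" by (rule subgroup.m_closed[OF sg s j])
  thus "Rk n (2 * k) \<in> H" using SS[OF n] by simp
qed

lemma odd_all:
  assumes N: "H \<lhd> dihedral n" and n: "n > 0" and o: "odd n" and j: "Sk n j \<in> H"
  shows "H = carrier (dihedral n)"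
proof
  show "H \<subseteq> carrier (dihedral n)" using N by (simp add: normal_def subgroup.subset)
next
  obtain p where p: "int n = 2 * p + 1" using o by (metis odd_two_times_div_two_succ of_nat_add of_nat_mult of_nat_1 of_nat_numeral)
  show "carrier (dihedral n) \<subseteq> H"
  proof
    fix x assume x: "x \<in> carrier (dihedral n)"
    show "x \<in> H"
    proof (cases rule: car_cases[OF x])
      case (1 m)
      have "Rk n (2 * (m * (p + 1))) \<in> H" by (rule refl_conj[OF N n j])
      moreover have "Rk n (2 * (m * (p + 1))) = Rk n m"
      proof -
        have "2 * (m * (p + 1)) = m + m * int n" using p by (simp add: algebra_simps)
        thus ?thesis using Rk_eq[OF n] by simp
      qed
      ultimately show ?thesis using 1 by simp
    next
      case (2 m)
      have "Sk n (j + 2 * ((m - j) * (p + 1))) \<in> H" by (rule refl_conj[OF N n j])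
      moreover have "Sk n (j + 2 * ((m - j) * (p + 1))) = Sk n m"
      proof -
        have "j + 2 * ((m - j) * (p + 1)) = m + (m - j) * int n" using p by (simp add: algebra_simps)
        thus ?thesis using Sk_eq[OF n] by simp
      qed
      ultimately show ?thesis using 2 by simp
    qed
  qed
qed


lemma even_class:
  assumes N: "H \<lhd> dihedral n" and n: "n > 0" and e: "even n" and j: "Sk n j \<in> H"
  shows "H = carrier (dihedral n) \<or> H = E0 n \<or> H = E1 n"
proof -
  have g: "group (dihedral n)" using N by (simp add: normal_def)
  have sg: "subgroup H (dihedral n)" using N by (simp add: normal_def)
  define E where "E = (if even j then E0 n else E1 n)"
  have Esub: "E \<subseteq> carrier (dihedral n)" unfolding E_def using E0_sub E1_sub by auto
  have ER: "\<And>k. Rk n k \<in> E \<longleftrightarrow> even k"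
    by (cases "even j") (simp_all add: E_def e n)
  have ES: "\<And>k. Sk n k \<in> E \<longleftrightarrow> even (k - j)"
    by (cases "even j") (simp_all add: E_def e n)
  have EH: "E \<subseteq> H"
  proof
    fix x assume x: "x \<in> E"
    show "x \<in> H"
    proof (cases rule: car_cases[OF subsetD[OF Esub x]])
      case (1 k)
      have "even k" using x 1 ER by simp
      then obtain q where "k = 2 * q" by (rule evenE)
      thus ?thesis using refl_conj(1)[OF N n j, of q] 1 by simp
    next
      case (2 k)
      have "even (k - j)" using x 2 ES by simp
      then obtain q where q: "k - j = 2 * q" by (rule evenE)
      hence "k = j + 2 * q" by simp
      thus ?thesis using refl_conj(2)[OF N n j, of q] 2 by simp
    qed
  qed
  have idx: "\<And>x y. x \<in> carrier (dihedral n) \<Longrightarrow> x \<notin> E \<Longrightarrow> y \<in> carrier (dihedral n) \<Longrightarrow> y \<notin> E \<Longrightarrow>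
     inv\<^bsub>dihedral n\<^esub> x \<otimes>\<^bsub>dihedral n\<^esub> y \<in> E"
  proof -
    fix x y assume x: "x \<in> carrier (dihedral n)" "x \<notin> E" and y: "y \<in> carrier (dihedral n)" "y \<notin> E"
    show "inv\<^bsub>dihedral n\<^esub> x \<otimes>\<^bsub>dihedral n\<^esub> y \<in> E"
    proof (cases rule: car_cases[OF x(1)])
      case xk: (1 k)
      hence k: "odd k" using x(2) ER by simp
      show ?thesis
      proof (cases rule: car_cases[OF y(1)])
        case yl: (1 l)
        hence "odd l" using y(2) ER by simp
        thus ?thesis using k xk yl by (simp add: inv_R[OF g n] RR[OF n] ER)
      next
        case yl: (2 l)
        hence "odd (l - j)" using y(2) ES by simp
        thus ?thesis using k xk yl by (simp add: inv_R[OF g n] RS[OF n] ES)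
      qed
    next
      case xk: (2 k)
      hence k: "odd (k - j)" using x(2) ES by simp
      show ?thesis
      proof (cases rule: car_cases[OF y(1)])
        case yl: (1 l)
        hence "odd l" using y(2) ER by simp
        thus ?thesis using k xk yl by (simp add: inv_S[OF g n] SR[OF n] ES)
      next
        case yl: (2 l)
        hence "odd (l - j)" using y(2) ES by simp
        thus ?thesis using k xk yl by (simp add: inv_S[OF g n] SS[OF n] ER)
      qed
    qed
  qed
  show ?thesis
  proof (cases "H \<subseteq> E")
    case True
    hence "H = E" using EH by auto
    thus ?thesis unfolding E_def by (auto split: if_splits)
  next
    case False
    then obtain x where x: "x \<in> H" "x \<notin> E" by auto
    have xc: "x \<in> carrier (dihedral n)" using x subgroup.subset[OF sg] by auto
    have "carrier (dihedral n) \<subseteq> H"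
    proof
      fix y assume y: "y \<in> carrier (dihedral n)"
      show "y \<in> H"
      proof (cases "y \<in> E")
        case True thus ?thesis using EH by auto
      next
        case False
        have "inv\<^bsub>dihedral n\<^esub> x \<otimes>\<^bsub>dihedral n\<^esub> y \<in> H" using idx[OF xc x(2) y False] EH by auto
        hence "x \<otimes>\<^bsub>dihedral n\<^esub> (inv\<^bsub>dihedral n\<^esub> x \<otimes>\<^bsub>dihedral n\<^esub> y) \<in> H"
          using subgroup.m_closed[OF sg x(1)] by auto
        moreover have ic: "inv\<^bsub>dihedral n\<^esub> x \<otimes>\<^bsub>dihedral n\<^esub> y \<in> carrier (dihedral n)"
          using group.inv_closed[OF g xc] y monoid.m_closed[OF group.is_monoid[OF g]] by blast
        moreover have "y = x \<otimes>\<^bsub>dihedral n\<^esub> (inv\<^bsub>dihedral n\<^esub> x \<otimes>\<^bsub>dihedral n\<^esub> y)"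
          using group.inv_solve_left[OF g ic xc y] by simp
        ultimately show ?thesis by simp
      qed
    qed
    thus ?thesis using subgroup.subset[OF sg] by auto
  qed
qed

lemma crit_refl:
  assumes g: "group (dihedral n)" and n: "n > 0" and sg: "subgroup H (dihedral n)" and j: "Sk n j \<in> H"
  shows "crit (dihedral n) H"
  unfolding crit_def
proof (intro disjI2 ballI impI)
  fix x assume x: "x \<in> carrier (dihedral n)"
  have one: "Rk n 0 \<in> H" using subgroup.one_closed[OF sg] by (simp add: one_Rk)
  show "\<exists>y\<in>carrier (dihedral n). y \<otimes>\<^bsub>dihedral n\<^esub> inv\<^bsub>dihedral n\<^esub> x \<in> H \<and> y \<otimes>\<^bsub>dihedral n\<^esub> y = \<one>\<^bsub>dihedral n\<^esub>"
  proof (cases rule: car_cases[OF x])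
    case (1 k)
    have a: "Sk n (j - k) \<otimes>\<^bsub>dihedral n\<^esub> inv\<^bsub>dihedral n\<^esub> x = Sk n j"
      using 1 inv_R[OF g n] SR[OF n] by simp
    have b: "Sk n (j - k) \<otimes>\<^bsub>dihedral n\<^esub> Sk n (j - k) = \<one>\<^bsub>dihedral n\<^esub>"
      using SS[OF n] one_Rk by simp
    show ?thesis by (rule bexI[of _ "Sk n (j - k)"]) (use a b j Sk_car[OF n] in auto)
  next
    case (2 k)
    have a: "Sk n k \<otimes>\<^bsub>dihedral n\<^esub> inv\<^bsub>dihedral n\<^esub> x = Rk n 0"
      using 2 inv_S[OF g n] SS[OF n] by simp
    have b: "Sk n k \<otimes>\<^bsub>dihedral n\<^esub> Sk n k = \<one>\<^bsub>dihedral n\<^esub>"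
      using SS[OF n] one_Rk by simp
    show ?thesis by (rule bexI[of _ "Sk n k"]) (use a b one Sk_car[OF n] in auto)
  qed
qed

lemma crit_odd:
  assumes g: "group (dihedral n)" and n: "n > 0" and o: "odd n" and sg: "subgroup H (dihedral n)"
  shows "crit (dihedral n) H"
  unfolding crit_def
proof (intro disjI2 ballI impI)
  fix x assume x: "x \<in> carrier (dihedral n)" and xx: "x \<otimes>\<^bsub>dihedral n\<^esub> x \<in> H"
  have one: "Rk n 0 \<in> H" using subgroup.one_closed[OF sg] by (simp add: one_Rk)
  obtain p where p: "int n = 2 * p + 1" using o by (metis odd_two_times_div_two_succ of_nat_add of_nat_mult of_nat_1 of_nat_numeral)
  show "\<exists>y\<in>carrier (dihedral n). y \<otimes>\<^bsub>dihedral n\<^esub> inv\<^bsub>dihedral n\<^esub> x \<in> H \<and> y \<otimes>\<^bsub>dihedral n\<^esub> y = \<one>\<^bsub>dihedral n\<^esub>"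
  proof (cases rule: car_cases[OF x])
    case (1 k)
    have kk: "k + k = 2 * k" by simp
    have "Rk n (k + k) \<in> H" using xx 1 RR[OF n] by simp
    hence "Rk n (2 * k) \<in> H" by (simp only: kk)
    hence h: "Rk n (2 * k * (int (nat (p + 1)))) \<in> H" by (rule sg_pow[OF n sg])
    have p0: "p \<ge> 0" using p by linarith
    have "Rk n (2 * k * (p + 1)) = Rk n k"
    proof -
      have "2 * k * (p + 1) = k + k * int n" using p by (simp add: algebra_simps)
      thus ?thesis using Rk_eq[OF n] by simp
    qed
    hence "Rk n k \<in> H" using h p0 by simp
    hence "inv\<^bsub>dihedral n\<^esub> (Rk n k) \<in> H" by (rule subgroup.m_inv_closed[OF sg])
    hence "Rk n (- k) \<in> H" using inv_R[OF g n] by simp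
    moreover have "Rk n 0 \<otimes>\<^bsub>dihedral n\<^esub> inv\<^bsub>dihedral n\<^esub> x = Rk n (- k)"
      using 1 inv_R[OF g n] RR[OF n] by simp
    moreover have "Rk n 0 \<otimes>\<^bsub>dihedral n\<^esub> Rk n 0 = \<one>\<^bsub>dihedral n\<^esub>"
      using RR[OF n] one_Rk by simp
    ultimately show ?thesis by (intro bexI[of _ "Rk n 0"]) (use Rk_car[OF n, of 0] in auto)
  next
    case (2 k)
    have a: "Sk n k \<otimes>\<^bsub>dihedral n\<^esub> inv\<^bsub>dihedral n\<^esub> x = Rk n 0"
      using 2 inv_S[OF g n] SS[OF n] by simp
    have b: "Sk n k \<otimes>\<^bsub>dihedral n\<^esub> Sk n k = \<one>\<^bsub>dihedral n\<^esub>"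
      using SS[OF n] one_Rk by simp
    show ?thesis by (rule bexI[of _ "Sk n k"]) (use a b one Sk_car[OF n] in auto)
  qed
qed


definition cond :: "nat \<Rightarrow> nat \<Rightarrow> bool" where
  "cond m t \<longleftrightarrow> odd m \<or> m = 2 \<or> (m \<ge> 4 \<and> even m \<and> odd t)"

lemma card_Rot:
  assumes n: "n > 0" and d: "d > 0" "d dvd n"
  shows "card (Rot n d) = n div d"
proof -
  have nd: "n = d * (n div d)" using d by simp
  have "Rot n d = (\<lambda>q. (d * q, False)) ` {..<n div d}"
  proof (rule equalityI; rule subsetI)
    fix x assume x: "x \<in> Rot n d"
    then obtain i where i: "x = (i, False)" "i < n" "d dvd i" unfolding Rot_def car_D by auto
    then obtain q where q: "i = d * q" by auto
    have "d * q < d * (n div d)" using i q nd by simp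
    hence "q < n div d" by simp
    thus "x \<in> (\<lambda>q. (d * q, False)) ` {..<n div d}" using i q by auto
  next
    fix x assume "x \<in> (\<lambda>q. (d * q, False)) ` {..<n div d}"
    then obtain q where q: "x = (d * q, False)" "q < n div d" by auto
    have "d * q < d * (n div d)" using q(2) d(1) by (rule mult_strict_left_mono)
    hence "d * q < n" using d by simp
    thus "x \<in> Rot n d" using q unfolding Rot_def car_D by auto
  qed
  moreover have "inj_on (\<lambda>q. (d * q, False)) {..<n div d}" using d by (auto simp: inj_on_def)
  ultimately show ?thesis by (simp add: card_image)
qed

lemma crit_Rot_bwd:
  assumes g: "group (dihedral n)" and n: "n > 0" and d: "d > 0" "d dvd n" and c: "cond (n div d) d"
  shows "crit (dihedral n) (Rot n d)"
proof (cases "n div d \<le> 2")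
  case True thus ?thesis unfolding crit_def using card_Rot[OF n d] by simp
next
  case False
  note big = False
  define m where "m = n div d"
  have "n = d * m" unfolding m_def using d by simp
  hence nd: "int n = int d * int m" by simp
  have one: "Rk n 0 \<in> Rot n d" using d n by simp
  show ?thesis unfolding crit_def
  proof (intro disjI2 ballI impI)
    fix x assume x: "x \<in> carrier (dihedral n)" and xx: "x \<otimes>\<^bsub>dihedral n\<^esub> x \<in> Rot n d"
    show "\<exists>y\<in>carrier (dihedral n). y \<otimes>\<^bsub>dihedral n\<^esub> inv\<^bsub>dihedral n\<^esub> x \<in> Rot n d \<and> y \<otimes>\<^bsub>dihedral n\<^esub> y = \<one>\<^bsub>dihedral n\<^esub>"
    proof (cases rule: car_cases[OF x])
      case (1 k)
      have "Rk n (k + k) \<in> Rot n d" using xx 1 RR[OF n] by simp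
      hence dk: "int d dvd k + k" using d n by simp
      then obtain c where kc: "k + k = int d * c" by (elim dvdE)
      show ?thesis
      proof (cases "int d dvd k")
        case True
        have "Rk n 0 \<otimes>\<^bsub>dihedral n\<^esub> inv\<^bsub>dihedral n\<^esub> x = Rk n (- k)"
          using 1 inv_R[OF g n] RR[OF n] by simp
        moreover have "Rk n (- k) \<in> Rot n d" using True d n by simp
        moreover have "Rk n 0 \<otimes>\<^bsub>dihedral n\<^esub> Rk n 0 = \<one>\<^bsub>dihedral n\<^esub>"
          using RR[OF n] one_Rk by simp
        ultimately show ?thesis by (intro bexI[of _ "Rk n 0"]) (use Rk_car[OF n, of 0] in auto)
      next
        case False
        have ev: "even d"
        proof (rule ccontr)
          assume od: "odd d"
          have "even (int d * c)" using kc[symmetric] by simp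
          hence "even c" using od by simp
          then obtain c' where "c = 2 * c'" by (elim evenE)
          hence "k = int d * c'" using kc by simp
          thus False using False by simp
        qed
        then obtain e where e: "d = 2 * e" by (elim evenE)
        have mo: "odd m" using c big ev unfolding cond_def m_def by auto
        have kec: "k = int e * c" using kc e by simp
        have co: "odd c"
        proof
          assume "even c"
          then obtain c' where "c = 2 * c'" by (elim evenE)
          hence "k = int d * c'" using kec e by simp
          thus False using False by simp
        qed
        have "even (int m - c)" using mo co by simp
        then obtain w where w: "int m - c = 2 * w" by (elim evenE)
        let ?y = "Rk n (int e * int m)"
        have "?y \<otimes>\<^bsub>dihedral n\<^esub> inv\<^bsub>dihedral n\<^esub> x = Rk n (int e * int m + - k)"
          using 1 inv_R[OF g n] RR[OF n] by simp
        moreover have "int e * int m + - k = int d * w"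
        proof -
          have "int e * int m + - k = int e * (int m - c)" using kec by (simp add: algebra_simps)
          also have "\<dots> = int d * w" using w e by simp
          finally show ?thesis .
        qed
        moreover have "Rk n (int d * w) \<in> Rot n d" using d n by simp
        moreover have "?y \<otimes>\<^bsub>dihedral n\<^esub> ?y = \<one>\<^bsub>dihedral n\<^esub>"
        proof -
          have "int e * int m + int e * int m = int n" using nd e by simp
          hence "?y \<otimes>\<^bsub>dihedral n\<^esub> ?y = Rk n (int n)" using RR[OF n] by simp
          also have "\<dots> = Rk n 0" using Rk_eq[OF n] by simp
          finally show ?thesis using one_Rk by simp
        qed
        ultimately show ?thesis by (intro bexI[of _ ?y]) (use Rk_car[OF n] in auto)
      qed
    next
      case (2 k)
      have a: "Sk n k \<otimes>\<^bsub>dihedral n\<^esub> inv\<^bsub>dihedral n\<^esub> x = Rk n 0"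
        using 2 inv_S[OF g n] SS[OF n] by simp
      have b: "Sk n k \<otimes>\<^bsub>dihedral n\<^esub> Sk n k = \<one>\<^bsub>dihedral n\<^esub>"
        using SS[OF n] one_Rk by simp
      show ?thesis by (rule bexI[of _ "Sk n k"]) (use a b one Sk_car[OF n] in auto)
    qed
  qed
qed

lemma crit_Rot_fwd:
  assumes g: "group (dihedral n)" and n: "n > 0" and en: "even n" and d: "d > 0" "d dvd n"
    and cr: "crit (dihedral n) (Rot n d)"
  shows "cond (n div d) d"
proof (rule ccontr)
  assume nc: "\<not> cond (n div d) d"
  define m where "m = n div d"
  have nd: "n = d * m" unfolding m_def using d by simp
  have m0: "m > 0" using nd n by (cases m) auto
  have em: "even m" "m \<noteq> 2" using nc unfolding cond_def m_def by auto
  hence m4: "m \<ge> 4" using m0 by presburger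
  have ed: "even d" using nc m4 em unfolding cond_def m_def by auto
  then obtain e where e: "d = 2 * e" by (elim evenE)
  obtain m' where m': "m = 2 * m'" using em by (elim evenE)
  have e0: "int e \<noteq> 0" using e d by simp
  have "card (Rot n d) > 2" using card_Rot[OF n d] m4 unfolding m_def by simp
  hence cr2: "\<forall>x\<in>carrier (dihedral n). x \<otimes>\<^bsub>dihedral n\<^esub> x \<in> Rot n d \<longrightarrow>
    (\<exists>y\<in>carrier (dihedral n). y \<otimes>\<^bsub>dihedral n\<^esub> inv\<^bsub>dihedral n\<^esub> x \<in> Rot n d \<and> y \<otimes>\<^bsub>dihedral n\<^esub> y = \<one>\<^bsub>dihedral n\<^esub>)"
    using cr unfolding crit_def by simp
  have "Rk n (int e) \<otimes>\<^bsub>dihedral n\<^esub> Rk n (int e) \<in> Rot n d"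
    using RR[OF n] e d n by simp
  then obtain y where y: "y \<in> carrier (dihedral n)" "y \<otimes>\<^bsub>dihedral n\<^esub> inv\<^bsub>dihedral n\<^esub> (Rk n (int e)) \<in> Rot n d"
    "y \<otimes>\<^bsub>dihedral n\<^esub> y = \<one>\<^bsub>dihedral n\<^esub>"
    using cr2 Rk_car[OF n] by blast
  show False
  proof (cases rule: car_cases[OF y(1)])
    case (1 l)
    have "Rk n (l + - int e) \<in> Rot n d" using y(2) 1 inv_R[OF g n] RR[OF n] by simp
    hence "int d dvd l + - int e" using d n by simp
    then obtain r where r: "l + - int e = int d * r" by (elim dvdE)
    have "Rk n (l + l) = Rk n 0" using y(3) 1 RR[OF n] one_Rk by simp
    hence "(l + l) mod int n = 0" using Rk_eq[OF n] by simp
    then obtain c where c: "l + l = int n * c" by auto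
    have l1: "l = int e * (2 * r + 1)" using r e by (simp add: algebra_simps)
    have l2: "l = int e * (2 * int m' * c)" using c nd e m' by (simp add: algebra_simps)
    have "2 * r + 1 = 2 * int m' * c" using l1 l2 e0 by simp
    hence "(2 * r + 1) mod 2 = (2 * (int m' * c)) mod 2" by (simp add: algebra_simps)
    thus False by simp
  next
    case (2 l)
    have "Sk n (l - - int e) \<in> Rot n d" using y(2) 2 inv_R[OF g n] SR[OF n] by simp
    thus False by simp
  qed
qed


theorem theorem3p13:
  fixes n :: nat and H :: "(nat \<times> bool) set"
  assumes "n \<ge> 3"
    and "H \<lhd> dihedral n"
  shows "ssg_has_perfect_code (dihedral n) H \<longleftrightarrow>
    H = carrier (dihedral n) \<or>
    (odd n \<and> H \<subseteq> generate (dihedral n) {dih_a n}) \<or>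
    (even n \<and>
      (H = generate (dihedral n) {dih_a n [^]\<^bsub>dihedral n\<^esub> (2::nat), dih_b} \<or>
       H = generate (dihedral n) {dih_a n [^]\<^bsub>dihedral n\<^esub> (2::nat), dih_a n \<otimes>\<^bsub>dihedral n\<^esub> dih_b} \<or>
       (\<exists>t::nat. t > 0 \<and> t dvd n \<and> H = generate (dihedral n) {dih_a n [^]\<^bsub>dihedral n\<^esub> t} \<and>
          (odd (n div t) \<or> n div t = 2 \<or> (n div t \<ge> 4 \<and> even (n div t) \<and> odd t)))))"
proof -
  let ?D = "dihedral n"
  have N: "H \<lhd> ?D" by (rule assms(2))
  have g: "group ?D" using N by (simp add: normal_def)
  have sg: "subgroup H ?D" using N by (simp add: normal_def)
  have n: "n > 0" using assms(1) by simp
  have fin: "finite (carrier ?D)" unfolding car_D by simp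
  have "abs_setup H ?D" unfolding abs_setup_def abs_setup_axioms_def using N fin by simp
  hence ci: "ssg_has_perfect_code ?D H \<longleftrightarrow> crit ?D H" by (rule abs_setup.code_iff)
  have aR: "dih_a n = Rk n 1" by (rule a_R[OF n])
  have at: "\<And>t::nat. dih_a n [^]\<^bsub>?D\<^esub> t = Rk n (int t)" using pow_R[OF g n] aR by simp
  have a2: "dih_a n [^]\<^bsub>?D\<^esub> (2::nat) = Rk n 2" using at[of 2] by simp
  have ab: "dih_a n \<otimes>\<^bsub>?D\<^esub> dih_b = Sk n 1" unfolding aR b_S[of n] using RS[OF n] by simp
  have genA: "generate ?D {dih_a n} = Rot n 1" using gen_Rot[OF g n, of 1] aR by simp
  have gt: "\<And>t. t dvd n \<Longrightarrow> generate ?D {dih_a n [^]\<^bsub>?D\<^esub> t} = Rot n t"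
    using gen_Rot[OF g n] at by simp
  have gE0: "even n \<Longrightarrow> generate ?D {dih_a n [^]\<^bsub>?D\<^esub> (2::nat), dih_b} = E0 n"
    unfolding b_S[of n] using gen_E0[OF g n] a2 by simp
  have gE1: "even n \<Longrightarrow> generate ?D {dih_a n [^]\<^bsub>?D\<^esub> (2::nat), dih_a n \<otimes>\<^bsub>?D\<^esub> dih_b} = E1 n"
    using gen_E1[OF g n] a2 ab by simp
  show ?thesis
  proof (cases "\<exists>j. Sk n j \<in> H")
    case True
    then obtain j where j: "Sk n j \<in> H" by auto
    have cr: "crit ?D H" by (rule crit_refl[OF g n sg j])
    show ?thesis
    proof (cases "even n")
      case False
      thus ?thesis using odd_all[OF N n False j] ci cr by simp
    next
      case True
      thus ?thesis using even_class[OF N n True j] ci cr gE0 gE1 by auto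
    qed
  next
    case False
    hence noS: "\<And>k. Sk n k \<notin> H" by auto
    obtain d where d: "d > 0" "d dvd n" "H = Rot n d" using rot_class[OF g n sg noS] by auto
    show ?thesis
    proof (cases "even n")
      case False
      have "H \<subseteq> generate ?D {dih_a n}" using d genA unfolding Rot_def by auto
      thus ?thesis using crit_odd[OF g n False sg] ci False by simp
    next
      case True
      have s0: "Sk n 0 \<in> carrier ?D" "Sk n 0 \<in> E0 n" "Sk n 1 \<in> E1 n" using Sk_car[OF n] True n by auto
      have ne: "H \<noteq> carrier ?D" "H \<noteq> E0 n" "H \<noteq> E1 n"
        using s0 d(3) Rot_S[of n 0 d] Rot_S[of n 1 d] by metis+
      have tiff: "(\<exists>t::nat. t > 0 \<and> t dvd n \<and> H = generate ?D {dih_a n [^]\<^bsub>?D\<^esub> t} \<and>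
          (odd (n div t) \<or> n div t = 2 \<or> (n div t \<ge> 4 \<and> even (n div t) \<and> odd t))) \<longleftrightarrow> cond (n div d) d"
      proof
        assume "\<exists>t::nat. t > 0 \<and> t dvd n \<and> H = generate ?D {dih_a n [^]\<^bsub>?D\<^esub> t} \<and>
          (odd (n div t) \<or> n div t = 2 \<or> (n div t \<ge> 4 \<and> even (n div t) \<and> odd t))"
        then obtain t where t: "t > 0" "t dvd n" "Rot n d = Rot n t"
          and ct: "odd (n div t) \<or> n div t = 2 \<or> (n div t \<ge> 4 \<and> even (n div t) \<and> odd t)"
          using gt d(3) by auto
        have "Rk n (int d) \<in> Rot n t" using t(3) d n by (metis Rot_R dvd_refl)
        hence "t dvd d" using t n by simp
        moreover have "Rk n (int t) \<in> Rot n d" using t(3) t n by (metis Rot_R dvd_refl)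
        hence "d dvd t" using d n by simp
        ultimately have "t = d" by (rule dvd_antisym)
        thus "cond (n div d) d" using ct unfolding cond_def by simp
      next
        assume "cond (n div d) d"
        thus "\<exists>t::nat. t > 0 \<and> t dvd n \<and> H = generate ?D {dih_a n [^]\<^bsub>?D\<^esub> t} \<and>
          (odd (n div t) \<or> n div t = 2 \<or> (n div t \<ge> 4 \<and> even (n div t) \<and> odd t))"
          using d gt[of d] unfolding cond_def by auto
      qed
      have "crit ?D H \<longleftrightarrow> cond (n div d) d"
        using crit_Rot_fwd[OF g n True d(1,2)] crit_Rot_bwd[OF g n d(1,2)] d(3) by auto
      thus ?thesis using ci tiff ne True gE0 gE1 by simp
    qed
  qed
qed


end
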